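(* Define $y'\in\mathbb{R}^{\mathcal F}$ by $y'_u=x_{vu}$ if $u\in G(v)$ for some (necessarily unique) $v\in P'$, and $y'_u=0$ otherwise, and let $x'$ be an optimal assignment w.r.t. $y'$ and $w'$. Then $y'\in\mathcal P$, $(x',y')$ is a feasible solution of $\textsc{FacilityMatLP}(w',\mathcal M)$, and $\mathrm{cost}_{w'}(x',y')\le T(y')\le3^pz^*$, where $z^*$ is the optimal value of $\textsc{FacilityMatLP}(w,\mathcal M)$.
   Context: Setting: $p\ge1$; a finite metric $d$ on $P\cup\mathcal F$; $f\ge0$; $w:P\to\mathbb{R}_{\ge0}$; matroid $\mathcal M$ on $\mathcal F$ with rank $r$. For demands $\omega$, $\mathrm{cost}_\omega(x,y)=\sum_u f(u)y_u+\sum_{v,u}\omega(v)d(v,u)^px_{vu}$; $\textsc{FacilityMatLP}(\omega,\mathcal M)$ minimizes it s.t. $\sum_u x_{vu}\ge1$, $\sum_{u\in S}y_u\le r(S)$ ($S\subseteq\mathcal F$), $0\le x_{vu}\le y_u$. An optimal assignment w.r.t. $\bar y$ and $\omega$ minimizes $\sum_{v,u}\omega(v)d(v,u)^px_{vu}$ over $x$ with $\sum_u x_{vu}\ge1$, $0\le x_{vu}\le\bar y_u$. $(x,y)$ is an optimal LP solution for $w$ (value $z^*$) with $\sum_u x_{vu}=1$; $\mathcal R(v)=(\sum_ud(v,u)^px_{vu})^{1/p}$. Client consolidation gives $w'$ (order clients by non-decreasing $\mathcal R$; for $i<j$, if $d(v_i,v_j)\le2^{(p+1)/p}\mathcal R(v_j)$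 and $w'(v_i)>0$, move all of $w'(v_j)$ to $v_i$); $P'=\mathrm{supp}(w')$, $|P'|\ge2$. For $v\in P'$: $F(v)$ = facilities whose nearest client in $P'$ is $v$ (ties arbitrary, a partition of $\mathcal F$); $F'(v)=\{u\in F(v):d(u,v)\le2^{1/p}\mathcal R(v)\}$; $\gamma_v=\min_{u\notin F(v)}d(v,u)$; $G(v)=\{u\in F(v):d(v,u)\le\gamma_v\}$. $T(\bar y)=\sum_uf(u)\bar y_u+\sum_{v\in P'}w'(v)\big(\sum_{u\in G(v)}d(v,u)^p\bar y_u+3^p\gamma_v^p(1-\sum_{u\in G(v)}\bar y_u)\big)$. $\mathcal P=\{\bar y\ge0:\sum_{u\in S}\bar y_u\le r(S)\ \forall S;\ \sum_{u\in F'(v)}\bar y_u\ge1/2,\ \sum_{u\in G(v)}\bar y_u\le1\ \forall v\in P'\}$. *)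

theory Defs
  imports Complex_Main
begin

definition metric_on :: "'a set \<Rightarrow> ('a \<Rightarrow> 'a \<Rightarrow> real) \<Rightarrow> bool" where
  "metric_on X d \<longleftrightarrow> finite X \<and>
     (\<forall>a\<in>X. \<forall>b\<in>X. d a b \<ge> 0 \<and> (d a b = 0 \<longleftrightarrow> a = b) \<and> d a b = d b a) \<and>
     (\<forall>a\<in>X. \<forall>b\<in>X. \<forall>c\<in>X. d a c \<le> d a b + d b c)"

definition matroid :: "'a set \<Rightarrow> ('a set \<Rightarrow> bool) \<Rightarrow> bool" where
  "matroid E indep \<longleftrightarrow> finite E \<and> indep {} \<and>
     (\<forall>A. indep A \<longrightarrow> A \<subseteq> E) \<and>
     (\<forall>A B. indep B \<and> A \<subseteq> B \<longrightarrow> indep A) \<and>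
     (\<forall>A B. indep A \<and> indep B \<and> card A < card B \<longrightarrow> (\<exists>e\<in>B - A. indep (insert e A)))"

definition mrank :: "('a set \<Rightarrow> bool) \<Rightarrow> 'a set \<Rightarrow> nat" where
  "mrank indep S = Max (card ` {I. I \<subseteq> S \<and> indep I})"

definition lp_cost :: "'a set \<Rightarrow> 'a set \<Rightarrow> ('a \<Rightarrow> real) \<Rightarrow> ('a \<Rightarrow> 'a \<Rightarrow> real) \<Rightarrow> real
    \<Rightarrow> ('a \<Rightarrow> real) \<Rightarrow> ('a \<Rightarrow> 'a \<Rightarrow> real) \<Rightarrow> ('a \<Rightarrow> real) \<Rightarrow> real" where
  "lp_cost F P f d p \<omega> x y =
     (\<Sum>u\<in>F. f u * y u) + (\<Sum>v\<in>P. \<Sum>u\<in>F. \<omega> v * d v u powr p * x v u)"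

definition lp_feasible :: "'a set \<Rightarrow> 'a set \<Rightarrow> ('a set \<Rightarrow> bool)
    \<Rightarrow> ('a \<Rightarrow> 'a \<Rightarrow> real) \<Rightarrow> ('a \<Rightarrow> real) \<Rightarrow> bool" where
  "lp_feasible F P indep x y \<longleftrightarrow>
     (\<forall>v\<in>P. (\<Sum>u\<in>F. x v u) \<ge> 1) \<and>
     (\<forall>S. S \<subseteq> F \<longrightarrow> (\<Sum>u\<in>S. y u) \<le> real (mrank indep S)) \<and>
     (\<forall>v\<in>P. \<forall>u\<in>F. 0 \<le> x v u \<and> x v u \<le> y u)"

definition assign_feasible :: "'a set \<Rightarrow> 'a set \<Rightarrow> ('a \<Rightarrow> real) \<Rightarrow> ('a \<Rightarrow> 'a \<Rightarrow> real) \<Rightarrow> bool" where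
  "assign_feasible F P yb x \<longleftrightarrow>
     (\<forall>v\<in>P. (\<Sum>u\<in>F. x v u) \<ge> 1) \<and> (\<forall>v\<in>P. \<forall>u\<in>F. 0 \<le> x v u \<and> x v u \<le> yb u)"

definition assign_cost :: "'a set \<Rightarrow> 'a set \<Rightarrow> ('a \<Rightarrow> 'a \<Rightarrow> real) \<Rightarrow> real
    \<Rightarrow> ('a \<Rightarrow> real) \<Rightarrow> ('a \<Rightarrow> 'a \<Rightarrow> real) \<Rightarrow> real" where
  "assign_cost F P d p \<omega> x = (\<Sum>v\<in>P. \<Sum>u\<in>F. \<omega> v * d v u powr p * x v u)"

definition optimal_assignment :: "'a set \<Rightarrow> 'a set \<Rightarrow> ('a \<Rightarrow> 'a \<Rightarrow> real) \<Rightarrow> real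
    \<Rightarrow> ('a \<Rightarrow> real) \<Rightarrow> ('a \<Rightarrow> real) \<Rightarrow> ('a \<Rightarrow> 'a \<Rightarrow> real) \<Rightarrow> bool" where
  "optimal_assignment F P d p yb \<omega> x \<longleftrightarrow> assign_feasible F P yb x \<and>
     (\<forall>x2. assign_feasible F P yb x2 \<longrightarrow> assign_cost F P d p \<omega> x \<le> assign_cost F P d p \<omega> x2)"

definition Rad :: "'a set \<Rightarrow> ('a \<Rightarrow> 'a \<Rightarrow> real) \<Rightarrow> real \<Rightarrow> ('a \<Rightarrow> 'a \<Rightarrow> real) \<Rightarrow> 'a \<Rightarrow> real" where
  "Rad F d p x v = (\<Sum>u\<in>F. d v u powr p * x v u) powr (1 / p)"

text \<open>Run of the consolidation on the ordered client list vs with thresholds thr: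
  the state after processing the first j clients of the list.\<close>
inductive cons_run :: "('a \<Rightarrow> 'a \<Rightarrow> real) \<Rightarrow> ('a \<Rightarrow> real) \<Rightarrow> 'a list \<Rightarrow> ('a \<Rightarrow> real)
    \<Rightarrow> nat \<Rightarrow> ('a \<Rightarrow> real) \<Rightarrow> bool"
  for d thr vs w0 where
  start: "cons_run d thr vs w0 0 w0"
| move: "\<lbrakk> cons_run d thr vs w0 j w1; j < length vs; i < j; w1 (vs ! i) > 0;
           d (vs ! i) (vs ! j) \<le> thr (vs ! j) \<rbrakk>
         \<Longrightarrow> cons_run d thr vs w0 (Suc j)
               (w1(vs ! i := w1 (vs ! i) + w1 (vs ! j), vs ! j := 0))"
| stay: "\<lbrakk> cons_run d thr vs w0 j w1; j < length vs;
           \<not> (\<exists>i<j. w1 (vs ! i) > 0 \<and> d (vs ! i) (vs ! j) \<le> thr (vs ! j)) \<rbrakk>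
         \<Longrightarrow> cons_run d thr vs w0 (Suc j) w1"

definition client_consolidation :: "'a set \<Rightarrow> 'a set \<Rightarrow> ('a \<Rightarrow> 'a \<Rightarrow> real) \<Rightarrow> real
    \<Rightarrow> ('a \<Rightarrow> 'a \<Rightarrow> real) \<Rightarrow> ('a \<Rightarrow> real) \<Rightarrow> ('a \<Rightarrow> real) \<Rightarrow> bool" where
  "client_consolidation P F d p x w w' \<longleftrightarrow>
     (\<exists>vs. distinct vs \<and> set vs = P \<and> sorted (map (Rad F d p x) vs) \<and>
        cons_run d (\<lambda>v. 2 powr ((p + 1) / p) * Rad F d p x v) vs w (length vs) w')"

definition nearest_map :: "'a set \<Rightarrow> 'a set \<Rightarrow> ('a \<Rightarrow> 'a \<Rightarrow> real) \<Rightarrow> ('a \<Rightarrow> 'a) \<Rightarrow> bool" where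
  "nearest_map F P' d near \<longleftrightarrow> (\<forall>u\<in>F. near u \<in> P' \<and> (\<forall>v\<in>P'. d u (near u) \<le> d u v))"

definition Fcl :: "'a set \<Rightarrow> ('a \<Rightarrow> 'a) \<Rightarrow> 'a \<Rightarrow> 'a set" where
  "Fcl F near v = {u\<in>F. near u = v}"

definition Fpr :: "'a set \<Rightarrow> ('a \<Rightarrow> 'a) \<Rightarrow> ('a \<Rightarrow> 'a \<Rightarrow> real) \<Rightarrow> real
    \<Rightarrow> ('a \<Rightarrow> 'a \<Rightarrow> real) \<Rightarrow> 'a \<Rightarrow> 'a set" where
  "Fpr F near d p x v = {u \<in> Fcl F near v. d u v \<le> 2 powr (1 / p) * Rad F d p x v}"

definition gam :: "'a set \<Rightarrow> ('a \<Rightarrow> 'a) \<Rightarrow> ('a \<Rightarrow> 'a \<Rightarrow> real) \<Rightarrow> 'a \<Rightarrow> real" where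
  "gam F near d v = Min (d v ` (F - Fcl F near v))"

definition Gcl :: "'a set \<Rightarrow> ('a \<Rightarrow> 'a) \<Rightarrow> ('a \<Rightarrow> 'a \<Rightarrow> real) \<Rightarrow> 'a \<Rightarrow> 'a set" where
  "Gcl F near d v = {u \<in> Fcl F near v. d v u \<le> gam F near d v}"

definition Tval :: "'a set \<Rightarrow> 'a set \<Rightarrow> ('a \<Rightarrow> real) \<Rightarrow> ('a \<Rightarrow> 'a \<Rightarrow> real) \<Rightarrow> real
    \<Rightarrow> ('a \<Rightarrow> real) \<Rightarrow> ('a \<Rightarrow> 'a) \<Rightarrow> ('a \<Rightarrow> real) \<Rightarrow> real" where
  "Tval F P' f d p w' near yb =
     (\<Sum>u\<in>F. f u * yb u) +
     (\<Sum>v\<in>P'. w' v * ((\<Sum>u\<in>Gcl F near d v. d v u powr p * yb u)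
        + 3 powr p * gam F near d v powr p * (1 - (\<Sum>u\<in>Gcl F near d v. yb u))))"

definition polyP :: "'a set \<Rightarrow> 'a set \<Rightarrow> ('a set \<Rightarrow> bool) \<Rightarrow> ('a \<Rightarrow> 'a \<Rightarrow> real) \<Rightarrow> real
    \<Rightarrow> ('a \<Rightarrow> 'a \<Rightarrow> real) \<Rightarrow> ('a \<Rightarrow> 'a) \<Rightarrow> ('a \<Rightarrow> real) \<Rightarrow> bool" where
  "polyP F P' indep d p x near yb \<longleftrightarrow>
     (\<forall>u\<in>F. yb u \<ge> 0) \<and>
     (\<forall>S. S \<subseteq> F \<longrightarrow> (\<Sum>u\<in>S. yb u) \<le> real (mrank indep S)) \<and>
     (\<forall>v\<in>P'. (\<Sum>u\<in>Fpr F near d p x v. yb u) \<ge> 1 / 2 \<and> (\<Sum>u\<in>Gcl F near d v. yb u) \<le> 1)"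

end

theory Submission
  imports Defs
begin

lemma cons_inv:
  assumes "cons_run d thr vs w0 j w1" "distinct vs" "\<forall>v\<in>set vs. w0 v \<ge> 0"
    and g: "\<forall>i k. i < k \<longrightarrow> k < length vs \<longrightarrow> g (vs!i) \<le> (g (vs!k)::real)"
  shows "j \<le> length vs \<and> (\<forall>v\<in>set vs. w1 v \<ge> 0) \<and>
    (\<forall>i k. i<k \<longrightarrow> k<j \<longrightarrow> w1(vs!i) > 0 \<longrightarrow> w1(vs!k)>0 \<longrightarrow> d (vs!i) (vs!k) > thr (vs!k)) \<and>
    (\<Sum>v\<in>set vs. w1 v * g v) \<le> (\<Sum>v\<in>set vs. w0 v * g v)"
  using assms(1)
proof (induction rule: cons_run.induct)
  case start
  then show ?case using assms by auto
next
  case (move j w1 i)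
  define a where "a = vs!i"
  define b where "b = vs!j"
  have ab: "a \<noteq> b" using move.hyps assms(2) unfolding a_def b_def
    by (simp add: nth_eq_iff_index_eq)
  have aset: "a \<in> set vs" "b \<in> set vs" using move.hyps unfolding a_def b_def by auto
  let ?w2 = "w1(a := w1 a + w1 b, b := 0)"
  have nn: "\<forall>v\<in>set vs. w1 v \<ge> 0" using move.IH by blast
  have wa: "w1 a > 0" using move.hyps a_def by simp
  have nn2: "\<forall>v\<in>set vs. ?w2 v \<ge> 0" using nn aset wa by auto
  have sep: "\<forall>i' k. i'<k \<longrightarrow> k<Suc j \<longrightarrow> ?w2(vs!i') > 0 \<longrightarrow> ?w2(vs!k)>0 \<longrightarrow> d (vs!i') (vs!k) > thr (vs!k)"
  proof (intro allI impI)
    fix i' k assume h: "i' < k" "k < Suc j" "?w2(vs!i') > 0" "?w2(vs!k)>0"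
    have "k \<noteq> j" using h(4) ab b_def by auto
    hence kj: "k < j" using h by simp
    have ne: "vs!k \<noteq> b" "vs!i' \<noteq> b" using kj h(1) move.hyps assms(2) unfolding b_def
      by (simp_all add: nth_eq_iff_index_eq)
    have "w1 (vs!k) > 0" using h(4) ne wa by (auto split: if_splits)
    moreover have "w1 (vs!i') > 0" using h(3) ne wa by (auto split: if_splits)
    ultimately show "d (vs!i') (vs!k) > thr (vs!k)" using move.IH h(1) kj by blast
  qed
  have eq: "\<And>v. ?w2 v * g v = w1 v * g v + (if v = a then w1 b * g a else 0) - (if v = b then w1 b * g b else 0)"
    using ab by (auto simp: algebra_simps)
  have "(\<Sum>v\<in>set vs. ?w2 v * g v) = (\<Sum>v\<in>set vs. w1 v * g v) + w1 b * g a - w1 b * g b"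
    unfolding eq using aset by (simp add: sum.distrib sum_subtractf)
  also have "\<dots> \<le> (\<Sum>v\<in>set vs. w1 v * g v)"
  proof -
    have "g a \<le> g b" using g move.hyps unfolding a_def b_def by blast
    moreover have "w1 b \<ge> 0" using nn aset by blast
    ultimately show ?thesis by (simp add: mult_left_mono)
  qed
  finally show ?case using move.IH move.hyps nn2 sep unfolding a_def b_def by auto
next
  case (stay j w1)
  have sep: "\<forall>i' k. i'<k \<longrightarrow> k<Suc j \<longrightarrow> w1(vs!i') > 0 \<longrightarrow> w1(vs!k)>0 \<longrightarrow> d (vs!i') (vs!k) > thr (vs!k)"
  proof (intro allI impI)
    fix i' k assume h: "i' < k" "k < Suc j" "w1(vs!i') > 0" "w1(vs!k)>0"
    show "d (vs!i') (vs!k) > thr (vs!k)"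
    proof (cases "k = j")
      case True thus ?thesis using stay.hyps h by (auto simp: not_le)
    next
      case False thus ?thesis using stay.IH h by auto
    qed
  qed
  then show ?case using stay by auto
qed


lemma sum_two:
  fixes f g :: "'a \<Rightarrow> real"
  assumes "finite F" "A \<subseteq> F" "B \<subseteq> F" "A \<inter> B = {}"
  shows "(\<Sum>u\<in>F. if u\<in>A then f u else if u\<in>B then g u else 0) = sum f A + sum g B"
proof -
  have "(\<Sum>u\<in>F. if u\<in>A then f u else if u\<in>B then g u else 0)
      = (\<Sum>u\<in>F. (if u\<in>A then f u else 0) + (if u\<in>B then g u else 0))"
    using assms(4) by (intro sum.cong) auto
  also have "\<dots> = sum f (F \<inter> A) + sum g (F \<inter> B)"
    using assms(1) by (simp add: sum.distrib sum.inter_restrict)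
  also have "F \<inter> A = A" using assms by auto
  also have "F \<inter> B = B" using assms by auto
  finally show ?thesis .
qed

theorem mainTheorem15:
  fixes P F P' :: "'a set" and d :: "'a \<Rightarrow> 'a \<Rightarrow> real" and p :: real
    and f w w' y y' :: "'a \<Rightarrow> real" and indep :: "'a set \<Rightarrow> bool"
    and x x' :: "'a \<Rightarrow> 'a \<Rightarrow> real" and near :: "'a \<Rightarrow> 'a"
  assumes p: "p \<ge> 1"
    and finP: "finite P" and finF: "finite F"
    and metric: "metric_on (P \<union> F) d"
    and f_nonneg: "\<forall>u\<in>F. f u \<ge> 0"
    and w_nonneg: "\<forall>v\<in>P. w v \<ge> 0"
    and matroid: "matroid F indep"
    and xy_feas: "lp_feasible F P indep x y"
    and xy_opt: "\<forall>x2 y2. lp_feasible F P indep x2 y2 \<longrightarrow> lp_cost F P f d p w x y \<le> lp_cost F P f d p w x2 y2"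
    and x_sum1: "\<forall>v\<in>P. (\<Sum>u\<in>F. x v u) = 1"
    and consol: "client_consolidation P F d p x w w'"
    and P'_def: "P' = {v\<in>P. w' v \<noteq> 0}"
    and P'_card: "card P' \<ge> 2"
    and near: "nearest_map F P' d near"
    and y'_def: "y' = (\<lambda>u. if \<exists>v\<in>P'. u \<in> Gcl F near d v
                           then x (THE v. v \<in> P' \<and> u \<in> Gcl F near d v) u else 0)"
    and x'_opt: "optimal_assignment F P d p y' w' x'"
  shows "polyP F P' indep d p x near y'
       \<and> lp_feasible F P indep x' y'
       \<and> lp_cost F P f d p w' x' y' \<le> Tval F P' f d p w' near y'
       \<and> Tval F P' f d p w' near y' \<le> 3 powr p * lp_cost F P f d p w x y"
proof -
  have dnn: "\<And>a b. a \<in> P \<union> F \<Longrightarrow> b \<in> P \<union> F \<Longrightarrow> d a b \<ge> 0"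
    and dsym: "\<And>a b. a \<in> P \<union> F \<Longrightarrow> b \<in> P \<union> F \<Longrightarrow> d a b = d b a"
    and d0: "\<And>a b. a \<in> P \<union> F \<Longrightarrow> b \<in> P \<union> F \<Longrightarrow> d a b = 0 \<longleftrightarrow> a = b"
    and tri: "\<And>a b c. a \<in> P \<union> F \<Longrightarrow> b \<in> P \<union> F \<Longrightarrow> c \<in> P \<union> F \<Longrightarrow> d a c \<le> d a b + d b c"
    using metric unfolding metric_on_def by blast+
  have xnn: "\<And>v u. v \<in> P \<Longrightarrow> u \<in> F \<Longrightarrow> 0 \<le> x v u" and xley: "\<And>v u. v \<in> P \<Longrightarrow> u \<in> F \<Longrightarrow> x v u \<le> y u"
    and yrank: "\<And>S. S \<subseteq> F \<Longrightarrow> (\<Sum>u\<in>S. y u) \<le> real (mrank indep S)"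
    using xy_feas unfolding lp_feasible_def by auto
  have p0: "p > 0" using p by simp
  define R where "R = Rad F d p x"
  define S where "S = (\<lambda>v. \<Sum>u\<in>F. d v u powr p * x v u)"
  define c where "c = 2 powr (1/p)"
  have c1: "c \<ge> 1" unfolding c_def using p0 by (intro ge_one_powr_ge_zero) auto
  have cp: "c powr p = 2" unfolding c_def using p0 by (simp add: powr_powr)
  have c2: "2 powr ((p+1)/p) = 2 * c"
  proof -
    have "(p+1)/p = 1 + 1/p" using p0 by (simp add: field_simps)
    thus ?thesis unfolding c_def by (simp add: powr_add)
  qed
  have Snn: "\<And>v. v \<in> P \<Longrightarrow> S v \<ge> 0" unfolding S_def
    using dnn xnn by (intro sum_nonneg mult_nonneg_nonneg) auto
  have Rnn: "\<And>v. R v \<ge> 0" unfolding R_def Rad_def by simp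
  have RS: "\<And>v. v \<in> P \<Longrightarrow> R v powr p = S v"
  proof -
    fix v assume v: "v \<in> P"
    have "R v powr p = S v powr (1/p * p)" unfolding R_def Rad_def S_def by (simp add: powr_powr)
    also have "\<dots> = S v" using p0 Snn[OF v] by simp
    finally show "R v powr p = S v" .
  qed
  have P'P: "P' \<subseteq> P" using P'_def by auto
  obtain vs where vs: "distinct vs" "set vs = P" "sorted (map R vs)"
    and run: "cons_run d (\<lambda>v. 2 powr ((p + 1) / p) * R v) vs w (length vs) w'"
    using consol unfolding client_consolidation_def R_def by blast
  have Rmono: "\<And>i k. i < k \<Longrightarrow> k < length vs \<Longrightarrow> R (vs!i) \<le> R (vs!k)"
    using vs(3) unfolding sorted_iff_nth_mono_less by (metis length_map nth_map order.strict_trans)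
  have inv: "length vs \<le> length vs \<and> (\<forall>v\<in>set vs. w' v \<ge> 0) \<and>
    (\<forall>i k. i<k \<longrightarrow> k<length vs \<longrightarrow> w'(vs!i) > 0 \<longrightarrow> w'(vs!k)>0 \<longrightarrow> d (vs!i) (vs!k) > 2 powr ((p + 1) / p) * R (vs!k)) \<and>
    (\<Sum>v\<in>set vs. w' v * (R v powr p)) \<le> (\<Sum>v\<in>set vs. w v * (R v powr p))"
  proof (rule cons_inv[OF run vs(1)])
    show "\<forall>v\<in>set vs. w v \<ge> 0" using w_nonneg vs by auto
    show "\<forall>i k. i < k \<longrightarrow> k < length vs \<longrightarrow> R (vs!i) powr p \<le> R (vs!k) powr p"
      using Rmono Rnn p0 by (auto intro: powr_mono2)
  qed
  have w'nn: "\<And>v. v \<in> P \<Longrightarrow> w' v \<ge> 0" using inv vs by auto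
  have w'pos: "\<And>v. v \<in> P' \<Longrightarrow> w' v > 0" using w'nn P'_def by force
  have SEP: "\<And>v v2. v \<in> P' \<Longrightarrow> v2 \<in> P' \<Longrightarrow> v \<noteq> v2 \<Longrightarrow> d v v2 > 2 * c * R v"
  proof -
    fix v v2 assume h: "v \<in> P'" "v2 \<in> P'" "v \<noteq> v2"
    obtain i where i: "i < length vs" "vs!i = v" using h P'P vs(2) by (metis in_set_conv_nth subsetD)
    obtain k where k: "k < length vs" "vs!k = v2" using h P'P vs(2) by (metis in_set_conv_nth subsetD)
    have ik: "i \<noteq> k" using i k h by auto
    have vP: "v \<in> P" "v2 \<in> P" using h P'P by auto
    show "d v v2 > 2 * c * R v"
    proof (cases "i < k")
      case True
      have "d v v2 > 2 powr ((p + 1) / p) * R v2" using inv True k i w'pos h by blast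
      moreover have "R v \<le> R v2" using Rmono True k i by blast
      moreover have "c \<ge> 0" using c1 by simp
      ultimately show ?thesis using c2 by (smt (verit, best) mult_left_mono)
    next
      case False
      hence "k < i" using ik by simp
      hence "d v2 v > 2 powr ((p + 1) / p) * R v" using inv k i w'pos h by blast
      thus ?thesis using c2 dsym vP by auto
    qed
  qed
  have EX: "\<And>v. v \<in> P \<Longrightarrow> \<exists>u\<in>F. x v u > 0 \<and> d v u \<le> R v"
  proof (rule ccontr)
    fix v assume v: "v \<in> P" and nex: "\<not> (\<exists>u\<in>F. x v u > 0 \<and> d v u \<le> R v)"
    have big: "\<And>u. u \<in> F \<Longrightarrow> x v u > 0 \<Longrightarrow> d v u powr p > S v"
    proof -
      fix u assume u: "u \<in> F" "x v u > 0"
      hence "d v u > R v" using nex by force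
      hence "d v u powr p > R v powr p" using Rnn p0 by (intro powr_less_mono2) auto
      thus "d v u powr p > S v" using RS v by simp
    qed
    obtain u0 where u0: "u0 \<in> F" "x v u0 > 0"
    proof (rule ccontr)
      assume "\<not> thesis"
      hence "\<forall>u\<in>F. x v u \<le> 0" using that by force
      hence "(\<Sum>u\<in>F. x v u) \<le> 0" by (simp add: sum_nonpos)
      thus False using x_sum1 v by simp
    qed
    have "(\<Sum>u\<in>F. S v * x v u) < (\<Sum>u\<in>F. d v u powr p * x v u)"
    proof (rule sum_strict_mono_ex1[OF finF])
      show "\<forall>u\<in>F. S v * x v u \<le> d v u powr p * x v u"
      proof
        fix u assume u: "u \<in> F"
        show "S v * x v u \<le> d v u powr p * x v u"
        proof (cases "x v u > 0")
          case True thus ?thesis using big[OF u] by (simp add: mult_right_mono)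
        next
          case False hence "x v u = 0" using xnn[OF v u] by simp
          thus ?thesis by simp
        qed
      qed
      show "\<exists>u\<in>F. S v * x v u < d v u powr p * x v u"
        using u0 big[OF u0] by (intro bexI[of _ u0]) (auto simp: mult_strict_right_mono)
    qed
    thus False using x_sum1 v unfolding S_def by (simp add: sum_distrib_left[symmetric])
  qed
  have other: "\<And>v. v \<in> P' \<Longrightarrow> \<exists>v2\<in>P'. v2 \<noteq> v"
  proof -
    fix v assume v: "v \<in> P'"
    show "\<exists>v2\<in>P'. v2 \<noteq> v"
    proof (rule ccontr)
      assume "\<not> (\<exists>v2\<in>P'. v2 \<noteq> v)"
      hence "P' \<subseteq> {v}" by blast
      hence "card P' \<le> card {v}" by (intro card_mono) auto
      thus False using P'_card by simp
    qed
  qed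
  have nearP: "\<And>u. u \<in> F \<Longrightarrow> near u \<in> P'" and nearle: "\<And>u v. u \<in> F \<Longrightarrow> v \<in> P' \<Longrightarrow> d u (near u) \<le> d u v"
    using near unfolding nearest_map_def by auto
  define Fc where "Fc = Fcl F near"
  define G where "G = Gcl F near d"
  define \<gamma> where "\<gamma> = gam F near d"
  define Fp where "Fp = Fpr F near d p x"
  have Fc_def': "\<And>v. Fc v = {u\<in>F. near u = v}" unfolding Fc_def Fcl_def by simp
  have F1: "\<And>v. v \<in> P' \<Longrightarrow> F - Fc v \<noteq> {}"
  proof -
    fix v assume v: "v \<in> P'"
    obtain v2 where v2: "v2 \<in> P'" "v2 \<noteq> v" using other[OF v] by blast
    obtain u where u: "u \<in> F" "x v2 u > 0" "d v2 u \<le> R v2" using EX v2 P'P by blast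
    have "u \<notin> Fc v"
    proof
      assume "u \<in> Fc v"
      hence nu: "near u = v" unfolding Fc_def' by simp
      have "d u v \<le> d u v2" using nearle[OF u(1) v2(1)] nu by simp
      have vP: "v \<in> P \<union> F" "v2 \<in> P \<union> F" "u \<in> P \<union> F" using v v2 P'P u by auto
      have "d v2 v \<le> d v2 u + d u v" using tri vP by blast
      also have "\<dots> \<le> 2 * R v2" using \<open>d u v \<le> d u v2\<close> u(3) dsym vP by simp
      also have "\<dots> \<le> 2 * c * R v2" using c1 Rnn[of v2] by (simp add: mult_right_mono)
      finally show False using SEP[OF v2(1) v v2(2)] by simp
    qed
    thus "F - Fc v \<noteq> {}" using u by auto
  qed
  have F2: "\<And>v u. v \<in> P' \<Longrightarrow> u \<in> F - Fc v \<Longrightarrow> d v u > c * R v"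
  proof -
    fix v u assume v: "v \<in> P'" and u: "u \<in> F - Fc v"
    have nu: "near u \<noteq> v" "near u \<in> P'" using u nearP unfolding Fc_def' by auto
    have vP: "v \<in> P \<union> F" "near u \<in> P \<union> F" "u \<in> P \<union> F" using v nu P'P u by auto
    have "2 * c * R v < d v (near u)" using SEP[OF v nu(2)] nu by auto
    also have "\<dots> \<le> d v u + d u (near u)" using tri vP by blast
    also have "\<dots> \<le> 2 * d v u" using nearle[of u v] u v dsym vP by simp
    finally show "d v u > c * R v" by simp
  qed
  have gam_eq: "\<And>v. \<gamma> v = Min (d v ` (F - Fc v))" unfolding \<gamma>_def gam_def Fc_def by simp
  have gam_le: "\<And>v u. v \<in> P' \<Longrightarrow> u \<in> F - Fc v \<Longrightarrow> \<gamma> v \<le> d v u"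
    unfolding gam_eq using finF by (intro Min_le) auto
  have gam_in: "\<And>v. v \<in> P' \<Longrightarrow> \<exists>u\<in>F - Fc v. \<gamma> v = d v u"
  proof -
    fix v assume v: "v \<in> P'"
    have "\<gamma> v \<in> d v ` (F - Fc v)" unfolding gam_eq using finF F1[OF v] by (intro Min_in) auto
    thus "\<exists>u\<in>F - Fc v. \<gamma> v = d v u" by auto
  qed
  have gam_gt: "\<And>v. v \<in> P' \<Longrightarrow> \<gamma> v > c * R v" using gam_in F2 by fastforce
  have gam_nn: "\<And>v. v \<in> P' \<Longrightarrow> \<gamma> v \<ge> 0" using gam_gt Rnn c1
    by (smt (verit, best) mult_nonneg_nonneg)
  have G_def': "\<And>v. G v = {u\<in>Fc v. d v u \<le> \<gamma> v}" unfolding G_def Gcl_def Fc_def \<gamma>_def by simp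
  have Fp_def': "\<And>v. Fp v = {u\<in>Fc v. d u v \<le> c * R v}" unfolding Fp_def Fpr_def Fc_def c_def R_def by simp
  have F3: "\<And>v. v \<in> P' \<Longrightarrow> Fp v \<subseteq> G v"
  proof
    fix v u assume v: "v \<in> P'" and u: "u \<in> Fp v"
    hence "u \<in> F" using Fp_def' Fc_def' by auto
    hence "d v u = d u v" using dsym v P'P by auto
    thus "u \<in> G v" using u gam_gt[OF v] unfolding Fp_def' G_def' by auto
  qed
  have F3b: "\<And>v u. v \<in> P' \<Longrightarrow> u \<in> F \<Longrightarrow> d v u \<le> c * R v \<Longrightarrow> u \<in> Fp v"
  proof -
    fix v u assume v: "v \<in> P'" and u: "u \<in> F" "d v u \<le> c * R v"
    hence "u \<in> Fc v" using F2 by force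
    moreover have "d u v = d v u" using dsym v P'P u by auto
    ultimately show "u \<in> Fp v" using u unfolding Fp_def' by simp
  qed
  have GFc: "\<And>v. G v \<subseteq> Fc v" and FcF: "\<And>v. Fc v \<subseteq> F" and FpFc: "\<And>v. Fp v \<subseteq> Fc v"
    unfolding G_def' Fc_def' Fp_def' by auto
  have F4: "\<And>v u. v \<in> P' \<Longrightarrow> u \<in> G v \<Longrightarrow> y' u = x v u"
  proof -
    fix v u assume v: "v \<in> P'" and u: "u \<in> G v"
    have "(THE v. v \<in> P' \<and> u \<in> Gcl F near d v) = v"
    proof (rule the_equality)
      show "v \<in> P' \<and> u \<in> Gcl F near d v" using v u G_def by simp
      fix v2 assume "v2 \<in> P' \<and> u \<in> Gcl F near d v2"
      hence "u \<in> Fc v2" using GFc G_def by blast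
      moreover have "u \<in> Fc v" using u GFc by blast
      ultimately show "v2 = v" unfolding Fc_def' by simp
    qed
    thus "y' u = x v u" using v u unfolding y'_def G_def by auto
  qed
  have y'nn: "\<And>u. y' u \<ge> 0"
  proof -
    fix u show "y' u \<ge> 0"
    proof (cases "\<exists>v\<in>P'. u \<in> G v")
      case True then obtain v where "v \<in> P'" "u \<in> G v" by blast
      thus ?thesis using F4 xnn P'P GFc FcF by force
    next
      case False thus ?thesis unfolding y'_def G_def by auto
    qed
  qed
  have y'le: "\<And>u. u \<in> F \<Longrightarrow> y' u \<le> y u"
  proof -
    fix u assume uF: "u \<in> F"
    obtain v0 where "v0 \<in> P'" using P'_card by (metis card.empty ex_in_conv not_numeral_le_zero)
    hence y0: "y u \<ge> 0" using xnn xley uF P'P by (meson order.trans subsetD)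
    show "y' u \<le> y u"
    proof (cases "\<exists>v\<in>P'. u \<in> G v")
      case True then obtain v where "v \<in> P'" "u \<in> G v" by blast
      thus ?thesis using F4 xley P'P uF by force
    next
      case False thus ?thesis using y0 unfolding y'_def G_def by auto
    qed
  qed
  have F5: "\<And>v. v \<in> P' \<Longrightarrow> (\<Sum>u\<in>Fp v. x v u) \<ge> 1/2"
  proof -
    fix v assume v: "v \<in> P'"
    have vP: "v \<in> P" using v P'P by auto
    have FpF: "Fp v \<subseteq> F" using FpFc FcF by blast
    have spl: "(\<Sum>u\<in>F. x v u) = (\<Sum>u\<in>F - Fp v. x v u) + (\<Sum>u\<in>Fp v. x v u)"
      using FpF finF by (rule sum.subset_diff)
    have far: "\<And>u. u \<in> F - Fp v \<Longrightarrow> d v u powr p > 2 * S v"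
    proof -
      fix u assume u: "u \<in> F - Fp v"
      hence lt: "d v u > c * R v" using F3b[OF v] by force
      have "(c * R v) powr p < d v u powr p"
        using lt c1 Rnn p0 by (intro powr_less_mono2) auto
      moreover have "(c * R v) powr p = 2 * S v"
        using c1 Rnn[of v] cp RS[OF vP] by (simp add: powr_mult)
      ultimately show "d v u powr p > 2 * S v" by simp
    qed
    have tnn: "\<And>u. u \<in> F \<Longrightarrow> d v u powr p * x v u \<ge> 0" using xnn vP by simp
    have part: "(\<Sum>u\<in>F - Fp v. d v u powr p * x v u) \<le> S v"
      unfolding S_def using finF tnn by (intro sum_mono2) auto
    have rest: "(\<Sum>u\<in>F - Fp v. x v u) \<le> 1/2"
    proof (cases "S v = 0")
      case True
      have "\<forall>u\<in>F - Fp v. x v u = 0"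
      proof
        fix u assume u: "u \<in> F - Fp v"
        have z: "(\<Sum>u\<in>F. d v u powr p * x v u) = 0" using True S_def by simp
        have "\<forall>u\<in>F. d v u powr p * x v u = 0" using z tnn finF by (simp add: sum_nonneg_eq_0_iff)
        hence "d v u powr p * x v u = 0" using u by blast
        thus "x v u = 0" using far[OF u] True by simp
      qed
      thus ?thesis by simp
    next
      case False
      hence Spos: "S v > 0" using Snn[OF vP] by simp
      have "(\<Sum>u\<in>F - Fp v. 2 * S v * x v u) \<le> (\<Sum>u\<in>F - Fp v. d v u powr p * x v u)"
        using far xnn vP by (intro sum_mono mult_right_mono) (auto intro: less_imp_le)
      hence "2 * S v * (\<Sum>u\<in>F - Fp v. x v u) \<le> S v" using part by (simp add: sum_distrib_left)
      hence "S v * (2 * (\<Sum>u\<in>F - Fp v. x v u)) \<le> S v * 1" by (simp add: algebra_simps)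
      hence "2 * (\<Sum>u\<in>F - Fp v. x v u) \<le> 1" using Spos by (simp only: mult_le_cancel_left_pos)
      thus ?thesis by simp
    qed
    show "(\<Sum>u\<in>Fp v. x v u) \<ge> 1/2" using spl rest x_sum1 vP by simp
  qed
  have Gsub: "\<And>v. G v \<subseteq> F" using GFc FcF by blast
  have finG: "\<And>v. finite (G v)" using Gsub finF finite_subset by blast
  have Gsum: "\<And>v. v \<in> P' \<Longrightarrow> (\<Sum>u\<in>G v. y' u) = (\<Sum>u\<in>G v. x v u)"
    using F4 by (intro sum.cong) auto
  have Gle1: "\<And>v. v \<in> P' \<Longrightarrow> (\<Sum>u\<in>G v. y' u) \<le> 1"
  proof -
    fix v assume v: "v \<in> P'"
    have "(\<Sum>u\<in>G v. x v u) \<le> (\<Sum>u\<in>F. x v u)"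
      using finF Gsub xnn v P'P by (intro sum_mono2) auto
    thus "(\<Sum>u\<in>G v. y' u) \<le> 1" using Gsum[OF v] x_sum1 v P'P by auto
  qed
  have Fphalf: "\<And>v. v \<in> P' \<Longrightarrow> (\<Sum>u\<in>Fp v. y' u) \<ge> 1/2"
  proof -
    fix v assume v: "v \<in> P'"
    have "(\<Sum>u\<in>Fp v. y' u) = (\<Sum>u\<in>Fp v. x v u)" using F3[OF v] F4[OF v] by (intro sum.cong) auto
    thus "(\<Sum>u\<in>Fp v. y' u) \<ge> 1/2" using F5[OF v] by simp
  qed
  have Gge: "\<And>v. v \<in> P' \<Longrightarrow> (\<Sum>u\<in>G v. y' u) \<ge> 1/2"
  proof -
    fix v assume v: "v \<in> P'"
    have "(\<Sum>u\<in>Fp v. y' u) \<le> (\<Sum>u\<in>G v. y' u)" using finG F3[OF v] y'nn by (intro sum_mono2) auto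
    thus "(\<Sum>u\<in>G v. y' u) \<ge> 1/2" using Fphalf[OF v] by simp
  qed
  have y'rank: "\<And>T. T \<subseteq> F \<Longrightarrow> (\<Sum>u\<in>T. y' u) \<le> real (mrank indep T)"
  proof -
    fix T assume T: "T \<subseteq> F"
    have "(\<Sum>u\<in>T. y' u) \<le> (\<Sum>u\<in>T. y u)" using T y'le by (intro sum_mono) auto
    thus "(\<Sum>u\<in>T. y' u) \<le> real (mrank indep T)" using yrank[OF T] by simp
  qed
  have POLY: "polyP F P' indep d p x near y'"
    unfolding polyP_def using y'nn y'rank Fphalf Gle1 unfolding Fp_def G_def by auto
  have x'feas: "assign_feasible F P y' x'" and x'min: "\<And>x2. assign_feasible F P y' x2 \<Longrightarrow>
      assign_cost F P d p w' x' \<le> assign_cost F P d p w' x2"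
    using x'_opt unfolding optimal_assignment_def by auto
  have FEAS: "lp_feasible F P indep x' y'"
    using x'feas y'rank unfolding assign_feasible_def lp_feasible_def by auto
  define U where "U = (\<lambda>v. SOME u. u \<in> F - Fc v \<and> \<gamma> v = d v u)"
  define V where "V = (\<lambda>v. near (U v))"
  have U: "\<And>v. v \<in> P' \<Longrightarrow> U v \<in> F - Fc v \<and> \<gamma> v = d v (U v)"
  proof -
    fix v assume v: "v \<in> P'"
    have "\<exists>u. u \<in> F - Fc v \<and> \<gamma> v = d v u" using gam_in[OF v] by blast
    thus "U v \<in> F - Fc v \<and> \<gamma> v = d v (U v)" unfolding U_def by (rule someI_ex)
  qed
  have V: "\<And>v. v \<in> P' \<Longrightarrow> V v \<in> P' \<and> V v \<noteq> v"
  proof -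
    fix v assume v: "v \<in> P'"
    have u: "U v \<in> F" "U v \<notin> Fc v" using U[OF v] by auto
    have "near (U v) \<noteq> v" using u unfolding Fc_def' by simp
    thus "V v \<in> P' \<and> V v \<noteq> v" using nearP[OF u(1)] unfolding V_def by simp
  qed
  have dist3: "\<And>v u. v \<in> P' \<Longrightarrow> u \<in> Fp (V v) \<Longrightarrow> d v u \<le> 3 * \<gamma> v"
  proof -
    fix v u assume v: "v \<in> P'" and u: "u \<in> Fp (V v)"
    define a where "a = U v"
    define b where "b = V v"
    have a: "a \<in> F" "\<gamma> v = d v a" using U[OF v] a_def by auto
    have b: "b \<in> P'" "b \<noteq> v" "b = near a" using V[OF v] b_def a_def V_def by auto
    have uF: "u \<in> F" and ub: "d u b \<le> c * R b" using u FpFc FcF unfolding b_def Fp_def' by auto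
    have mem: "v \<in> P \<union> F" "a \<in> P \<union> F" "b \<in> P \<union> F" "u \<in> P \<union> F"
      using v b P'P a uF by auto
    have ab: "d a b \<le> d a v" using nearle[OF a(1) v] b(3) by simp
    have "2 * c * R b < d b v" using SEP[OF b(1) v b(2)] .
    also have "\<dots> \<le> d b a + d a v" using tri mem by blast
    also have "\<dots> \<le> 2 * \<gamma> v" using ab a dsym mem by simp
    finally have cR: "c * R b < \<gamma> v" by simp
    have "d v u \<le> d v a + d a u" using tri mem by blast
    also have "d a u \<le> d a b + d b u" using tri mem by blast
    finally show "d v u \<le> 3 * \<gamma> v" using ab a ub cR dsym mem by simp
  qed
  define s where "s = (\<lambda>v. \<Sum>u\<in>G v. y' u)"
  define t where "t = (\<lambda>v. \<Sum>u\<in>Fp (V v). y' u)"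
  define k where "k = (\<lambda>v. (1 - s v) / t v)"
  define X where "X = (\<lambda>v u. if u \<in> G v then y' u else if u \<in> Fp (V v) then k v * y' u else 0)"
  have disj: "\<And>v. v \<in> P' \<Longrightarrow> G v \<inter> Fp (V v) = {}"
    using GFc FpFc V unfolding Fc_def' by fastforce
  have FpVF: "\<And>v. Fp (V v) \<subseteq> F" using FpFc FcF by blast
  have kb: "\<And>v. v \<in> P' \<Longrightarrow> 0 \<le> k v \<and> k v \<le> 1 \<and> k v * t v = 1 - s v"
  proof -
    fix v assume v: "v \<in> P'"
    have t: "t v \<ge> 1/2" using Fphalf V[OF v] t_def by simp
    have s: "s v \<ge> 1/2" "s v \<le> 1" using Gge[OF v] Gle1[OF v] s_def by auto
    show "0 \<le> k v \<and> k v \<le> 1 \<and> k v * t v = 1 - s v"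
      using t s unfolding k_def by (auto simp: divide_le_eq)
  qed
  have Xsum: "\<And>v. v \<in> P' \<Longrightarrow> (\<Sum>u\<in>F. X v u) = 1"
  proof -
    fix v assume v: "v \<in> P'"
    have "(\<Sum>u\<in>F. X v u) = (\<Sum>u\<in>G v. y' u) + (\<Sum>u\<in>Fp (V v). k v * y' u)"
      unfolding X_def using sum_two[OF finF Gsub FpVF disj[OF v]] .
    also have "\<dots> = s v + k v * t v" unfolding s_def t_def by (simp add: sum_distrib_left)
    finally show "(\<Sum>u\<in>F. X v u) = 1" using kb[OF v] by simp
  qed
  have Xb: "\<And>v u. v \<in> P' \<Longrightarrow> 0 \<le> X v u \<and> X v u \<le> y' u"
  proof -
    fix v u assume v: "v \<in> P'"
    have "k v * y' u \<le> 1 * y' u" using kb[OF v] y'nn[of u] by (intro mult_right_mono) auto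
    thus "0 \<le> X v u \<and> X v u \<le> y' u" unfolding X_def using kb[OF v] y'nn[of u] by auto
  qed
  define bnd where "bnd = (\<lambda>v. (\<Sum>u\<in>G v. d v u powr p * y' u) + 3 powr p * \<gamma> v powr p * (1 - (\<Sum>u\<in>G v. y' u)))"
  have Xcost: "\<And>v. v \<in> P' \<Longrightarrow> (\<Sum>u\<in>F. d v u powr p * X v u) \<le> bnd v"
  proof -
    fix v assume v: "v \<in> P'"
    have "(\<Sum>u\<in>F. d v u powr p * X v u) = (\<Sum>u\<in>F. if u \<in> G v then d v u powr p * y' u
        else if u \<in> Fp (V v) then d v u powr p * (k v * y' u) else 0)"
      unfolding X_def by (intro sum.cong) auto
    also have "\<dots> = (\<Sum>u\<in>G v. d v u powr p * y' u) + (\<Sum>u\<in>Fp (V v). d v u powr p * (k v * y' u))"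
      using sum_two[OF finF Gsub FpVF disj[OF v]] .
    also have "(\<Sum>u\<in>Fp (V v). d v u powr p * (k v * y' u)) \<le> (\<Sum>u\<in>Fp (V v). (3 * \<gamma> v) powr p * (k v * y' u))"
    proof (intro sum_mono mult_right_mono)
      fix u assume u: "u \<in> Fp (V v)"
      have "u \<in> F" using u FpVF by blast
      hence "d v u \<ge> 0" using dnn v P'P by auto
      thus "d v u powr p \<le> (3 * \<gamma> v) powr p" using dist3[OF v u] p0 by (intro powr_mono2) auto
      show "0 \<le> k v * y' u" using kb[OF v] y'nn by simp
    qed
    also have "(\<Sum>u\<in>Fp (V v). (3 * \<gamma> v) powr p * (k v * y' u)) = 3 powr p * \<gamma> v powr p * (k v * t v)"
      unfolding t_def using gam_nn[OF v] by (simp add: sum_distrib_left powr_mult mult.assoc)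
    finally show "(\<Sum>u\<in>F. d v u powr p * X v u) \<le> bnd v"
      unfolding bnd_def using kb[OF v] s_def by simp
  qed
  obtain v0 where v0: "v0 \<in> P'" using P'_card by (metis card.empty ex_in_conv not_numeral_le_zero)
  define X2 where "X2 = (\<lambda>v. if v \<in> P' then X v else X v0)"
  have X2feas: "assign_feasible F P y' X2"
    unfolding assign_feasible_def X2_def using Xsum Xb v0 by auto
  have "assign_cost F P d p w' X2 = (\<Sum>v\<in>P'. \<Sum>u\<in>F. w' v * d v u powr p * X v u)"
    unfolding assign_cost_def
  proof (rule sum.mono_neutral_cong_right[OF finP P'P])
    show "\<forall>v\<in>P - P'. (\<Sum>u\<in>F. w' v * d v u powr p * X2 v u) = 0" using P'_def by auto
    show "\<And>v. v \<in> P' \<Longrightarrow> (\<Sum>u\<in>F. w' v * d v u powr p * X2 v u) = (\<Sum>u\<in>F. w' v * d v u powr p * X v u)"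
      unfolding X2_def by simp
  qed
  also have "\<dots> = (\<Sum>v\<in>P'. w' v * (\<Sum>u\<in>F. d v u powr p * X v u))"
    by (simp add: sum_distrib_left mult.assoc)
  also have "\<dots> \<le> (\<Sum>v\<in>P'. w' v * bnd v)"
    using Xcost w'nn P'P by (intro sum_mono mult_left_mono) auto
  finally have costX: "assign_cost F P d p w' x' \<le> (\<Sum>v\<in>P'. w' v * bnd v)"
    using x'min[OF X2feas] by simp
  have Tval_eq: "Tval F P' f d p w' near y' = (\<Sum>u\<in>F. f u * y' u) + (\<Sum>v\<in>P'. w' v * bnd v)"
    unfolding Tval_def bnd_def G_def \<gamma>_def by simp
  have COST: "lp_cost F P f d p w' x' y' \<le> Tval F P' f d p w' near y'"
    using costX unfolding Tval_eq lp_cost_def assign_cost_def by simp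
  have p3: "3 powr p \<ge> 1" using p0 by (intro ge_one_powr_ge_zero) auto
  have bndS: "\<And>v. v \<in> P' \<Longrightarrow> bnd v \<le> 3 powr p * S v"
  proof -
    fix v assume v: "v \<in> P'"
    have vP: "v \<in> P" using v P'P by auto
    have rest: "1 - (\<Sum>u\<in>G v. y' u) = (\<Sum>u\<in>F - G v. x v u)"
      using Gsum[OF v] sum.subset_diff[OF Gsub[of v] finF, of "x v"] x_sum1 vP by simp
    have gle: "\<And>u. u \<in> F - G v \<Longrightarrow> \<gamma> v \<le> d v u"
    proof -
      fix u assume u: "u \<in> F - G v"
      show "\<gamma> v \<le> d v u"
      proof (cases "u \<in> Fc v")
        case True thus ?thesis using u unfolding G_def' by auto
      next
        case False thus ?thesis using u gam_le[OF v] by auto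
      qed
    qed
    have A: "(\<Sum>u\<in>G v. d v u powr p * y' u) \<le> (\<Sum>u\<in>G v. 3 powr p * (d v u powr p * x v u))"
    proof (intro sum_mono)
      fix u assume u: "u \<in> G v"
      have "u \<in> F" using u Gsub by blast
      hence "0 \<le> d v u powr p * x v u" using xnn vP by simp
      hence "d v u powr p * x v u \<le> 3 powr p * (d v u powr p * x v u)" using mult_right_mono[OF p3, of "d v u powr p * x v u"]
        by simp
      thus "d v u powr p * y' u \<le> 3 powr p * (d v u powr p * x v u)" using F4[OF v u] by simp
    qed
    have B: "3 powr p * \<gamma> v powr p * (\<Sum>u\<in>F - G v. x v u) \<le> (\<Sum>u\<in>F - G v. 3 powr p * (d v u powr p * x v u))"
      unfolding sum_distrib_left
    proof (intro sum_mono)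
      fix u assume u: "u \<in> F - G v"
      have "\<gamma> v powr p \<le> d v u powr p" using gle[OF u] gam_nn[OF v] p0 by (intro powr_mono2) auto
      hence "\<gamma> v powr p * x v u \<le> d v u powr p * x v u" using xnn vP u by (intro mult_right_mono) auto
      thus "3 powr p * \<gamma> v powr p * x v u \<le> 3 powr p * (d v u powr p * x v u)"
        by (simp add: mult.assoc)
    qed
    have "bnd v \<le> (\<Sum>u\<in>G v. 3 powr p * (d v u powr p * x v u)) + (\<Sum>u\<in>F - G v. 3 powr p * (d v u powr p * x v u))"
      unfolding bnd_def rest using A B by simp
    also have "\<dots> = (\<Sum>u\<in>F. 3 powr p * (d v u powr p * x v u))"
      using sum.subset_diff[OF Gsub[of v] finF, of "\<lambda>u. 3 powr p * (d v u powr p * x v u)"] by simp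
    also have "\<dots> = 3 powr p * S v" unfolding S_def by (simp add: sum_distrib_left)
    finally show "bnd v \<le> 3 powr p * S v" .
  qed
  have "(\<Sum>v\<in>P'. w' v * bnd v) \<le> (\<Sum>v\<in>P'. 3 powr p * (w' v * S v))"
  proof (intro sum_mono)
    fix v assume v: "v \<in> P'"
    have "w' v * bnd v \<le> w' v * (3 powr p * S v)" using bndS[OF v] w'nn v P'P by (intro mult_left_mono) auto
    thus "w' v * bnd v \<le> 3 powr p * (w' v * S v)" by (simp add: algebra_simps)
  qed
  also have "\<dots> = 3 powr p * (\<Sum>v\<in>P. w' v * S v)"
  proof -
    have "(\<Sum>v\<in>P'. w' v * S v) = (\<Sum>v\<in>P. w' v * S v)"
      by (rule sum.mono_neutral_left[OF finP P'P]) (auto simp: P'_def)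
    thus ?thesis by (simp add: sum_distrib_left[symmetric])
  qed
  also have "(\<Sum>v\<in>P. w' v * S v) = (\<Sum>v\<in>set vs. w' v * R v powr p)"
    using RS vs(2) by (intro sum.cong) auto
  also have "\<dots> \<le> (\<Sum>v\<in>set vs. w v * R v powr p)" using inv by blast
  also have "\<dots> = (\<Sum>v\<in>P. \<Sum>u\<in>F. w v * d v u powr p * x v u)"
    using RS vs(2) unfolding S_def by (intro sum.cong) (auto simp: sum_distrib_left mult.assoc)
  finally have T2: "(\<Sum>v\<in>P'. w' v * bnd v) \<le> 3 powr p * (\<Sum>v\<in>P. \<Sum>u\<in>F. w v * d v u powr p * x v u)"
    using p3 by simp
  have T1: "(\<Sum>u\<in>F. f u * y' u) \<le> 3 powr p * (\<Sum>u\<in>F. f u * y u)"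
  proof -
    have "(\<Sum>u\<in>F. f u * y' u) \<le> (\<Sum>u\<in>F. f u * y u)"
      using f_nonneg y'le by (intro sum_mono mult_left_mono) auto
    moreover have "(\<Sum>u\<in>F. f u * y u) \<ge> 0"
      using f_nonneg y'le y'nn by (intro sum_nonneg mult_nonneg_nonneg) (auto intro: order.trans)
    ultimately show ?thesis using mult_right_mono[OF p3, of "\<Sum>u\<in>F. f u * y u"] by simp
  qed
  have TB: "Tval F P' f d p w' near y' \<le> 3 powr p * lp_cost F P f d p w x y"
    unfolding Tval_eq lp_cost_def using T1 T2 by (simp add: distrib_left)
  show ?thesis using POLY FEAS COST TB by blast
qed

end
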